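(* Let $X$ be a compact riemannian lamination and let $\Omega\subseteq Y\subseteq X$ be such that $\Omega$ is open in the leafwise topology and $Y$ is compact in the leafwise topology. There exists an open subset $\hat\Omega$ of $X$ such that $\hat\Omega\cap Y=\Omega$.
   Context: A lamination is a separable metrizable space with an atlas of laminated charts $\Phi:U\to\,]-1,1[^d\times T$ whose transition maps locally have the form $(x,t)\mapsto(\phi(x,t),\tau(t))$ ($\tau$ a homeomorphism onto its image, $\phi(\cdot,t)$ smooth diffeomorphisms varying continuously in $C^\infty_{loc}$ with $t$); plaques glue into smooth manifolds called leaves. A riemannian lamination carries a leafwise smooth leafwise metric. The leafwise topology of $X$ is the smallest topology containing all open subsets of leaves; a set is compact in it iff it is a finite union of compact subsets of leaves. "Open subset of $X$" refers to the ambient topology of $X$. *)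

theory Defs
  imports "HOL-Analysis.Analysis"
begin

fun nderiv :: "'a::real_normed_vector list \<Rightarrow> ('a \<Rightarrow> 'b::real_normed_vector) \<Rightarrow> 'a \<Rightarrow> 'b" where
  "nderiv [] f = f"
| "nderiv (v # vs) f = (\<lambda>x. frechet_derivative (nderiv vs f) (at x) v)"

text \<open>C-infinity on an open set S: all iterated derivatives exist (and hence are continuous).\<close>
definition smooth_on :: "'a::real_normed_vector set \<Rightarrow> ('a \<Rightarrow> 'b::real_normed_vector) \<Rightarrow> bool" where
  "smooth_on S f \<longleftrightarrow> open S \<and> (\<forall>vs. \<forall>x\<in>S. nderiv vs f differentiable (at x))"

definition smooth_diffeo_on :: "'a::real_normed_vector set \<Rightarrow> ('a \<Rightarrow> 'a) \<Rightarrow> bool" where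
  "smooth_diffeo_on S f \<longleftrightarrow> smooth_on S f \<and> inj_on f S \<and> open (f ` S)
      \<and> smooth_on (f ` S) (inv_into S f)"

text \<open>The family t \<mapsto> f(-,t) (t ranging in W, a subset of the space T) is continuous
  for the C-infinity-loc topology on functions on V: for every derivative and every compact
  K in V, the derivatives converge uniformly on K.\<close>
definition cinf_loc_continuous ::
  "'a::real_normed_vector set \<Rightarrow> 't topology \<Rightarrow> 't set \<Rightarrow> ('a \<Rightarrow> 't \<Rightarrow> 'b::real_normed_vector) \<Rightarrow> bool" where
  "cinf_loc_continuous V T W f \<longleftrightarrow>
     (\<forall>vs K t0 e. compact K \<and> K \<subseteq> V \<and> t0 \<in> W \<and> e > 0 \<longrightarrow>
        (\<exists>N. openin T N \<and> t0 \<in> N \<and>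
           (\<forall>t\<in>N \<inter> W. \<forall>x\<in>K.
              dist (nderiv vs (\<lambda>y. f y t) x) (nderiv vs (\<lambda>y. f y t0) x) < e)))"

text \<open>The model plaque ]-1,1[^d, with d = CARD('n).\<close>
definition cube :: "(real^'n) set" where
  "cube = {x. \<forall>i. \<bar>x $ i\<bar> < 1}"

text \<open>A laminated chart: a domain U, a map Phi, and a transversal space T
  (all transversals of an atlas live in a common type 't).\<close>
record ('a, 'n, 't) lchart =
  ch_dom :: "'a set"
  ch_map :: "'a \<Rightarrow> (real^'n) \<times> 't"
  ch_T   :: "'t topology"

definition laminated_chart :: "'a topology \<Rightarrow> ('a, 'n::finite, 't) lchart \<Rightarrow> bool" where
  "laminated_chart X c \<longleftrightarrow> openin X (ch_dom c) \<and>
     homeomorphic_map (subtopology X (ch_dom c))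
        (prod_topology (subtopology euclidean cube) (ch_T c)) (ch_map c)"

text \<open>Transition maps locally of the form (x,t) \<mapsto> (phi(x,t), tau(t)).\<close>
definition compatible_charts :: "('a, 'n::finite, 't) lchart \<Rightarrow> ('a, 'n, 't) lchart \<Rightarrow> bool" where
  "compatible_charts c1 c2 \<longleftrightarrow>
     (\<forall>p \<in> ch_dom c1 \<inter> ch_dom c2.
        \<exists>V W \<phi> \<tau>. open V \<and> V \<subseteq> cube \<and> fst (ch_map c1 p) \<in> V \<and>
          openin (ch_T c1) W \<and> snd (ch_map c1 p) \<in> W \<and>
          V \<times> W \<subseteq> ch_map c1 ` (ch_dom c1 \<inter> ch_dom c2) \<and>
          (\<forall>q \<in> ch_dom c1 \<inter> ch_dom c2. fst (ch_map c1 q) \<in> V \<and> snd (ch_map c1 q) \<in> W \<longrightarrow>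
              ch_map c2 q = (\<phi> (fst (ch_map c1 q)) (snd (ch_map c1 q)), \<tau> (snd (ch_map c1 q)))) \<and>
          embedding_map (subtopology (ch_T c1) W) (ch_T c2) \<tau> \<and>
          (\<forall>t\<in>W. smooth_diffeo_on V (\<lambda>x. \<phi> x t)) \<and>
          cinf_loc_continuous V (ch_T c1) W \<phi>)"

definition lamination :: "'a topology \<Rightarrow> ('a, 'n::finite, 't) lchart set \<Rightarrow> bool" where
  "lamination X A \<longleftrightarrow> metrizable_space X \<and> separable_space X \<and>
     (\<forall>c\<in>A. laminated_chart X c) \<and>
     (\<Union>c\<in>A. ch_dom c) = topspace X \<and>
     (\<forall>c1\<in>A. \<forall>c2\<in>A. compatible_charts c1 c2)"

text \<open>Leafwise topology: generated by the open subsets of plaques, i.e. the sets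
  Phi^-1(V \<times> {t}) with V open in the cube.  (Open subsets of leaves are exactly the
  unions of such sets.)\<close>
definition leafwise_topology :: "('a, 'n::finite, 't) lchart set \<Rightarrow> 'a topology" where
  "leafwise_topology A = topology_generated_by
     {{q \<in> ch_dom c. fst (ch_map c q) \<in> V \<and> snd (ch_map c q) = t} | c V t.
        c \<in> A \<and> open V \<and> V \<subseteq> cube}"

text \<open>A leafwise riemannian metric, given in each chart c by a matrix g c x t (the metric
  of the plaque through t at the point x), symmetric positive definite, smooth in x and
  varying continuously in C-infinity-loc with t, and compatible under the transition maps.\<close>
definition riemannian_lamination ::
  "'a topology \<Rightarrow> ('a, 'n::finite, 't) lchart set \<Rightarrow>
   (('a, 'n, 't) lchart \<Rightarrow> real^'n \<Rightarrow> 't \<Rightarrow> real^'n^'n) \<Rightarrow> bool" where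
  "riemannian_lamination X A g \<longleftrightarrow> lamination X A \<and>
     (\<forall>c\<in>A. (\<forall>x\<in>cube. \<forall>t\<in>topspace (ch_T c).
                 transpose (g c x t) = g c x t \<and> (\<forall>v. v \<noteq> 0 \<longrightarrow> v \<bullet> (g c x t *v v) > 0)) \<and>
             (\<forall>t\<in>topspace (ch_T c). smooth_on cube (\<lambda>x. g c x t)) \<and>
             cinf_loc_continuous cube (ch_T c) (topspace (ch_T c)) (g c)) \<and>
     (\<forall>c1\<in>A. \<forall>c2\<in>A. \<forall>q \<in> ch_dom c1 \<inter> ch_dom c2.
        (let x = fst (ch_map c1 q); t = snd (ch_map c1 q);
             J = jacobian (\<lambda>z. fst (ch_map c2 (inv_into (ch_dom c1) (ch_map c1) (z, t)))) (at x)
         in g c1 x t = transpose J ** g c2 (fst (ch_map c2 q)) (snd (ch_map c2 q)) ** J))"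

end

theory Submission
  imports Defs
begin

lemma open_cube: "open (cube :: (real^'n::finite) set)"
proof -
  have "cube = (\<Inter>i\<in>UNIV. {x::real^'n. \<bar>x $ i\<bar> < 1})" unfolding cube_def by auto
  moreover have "open {x::real^'n. \<bar>x $ i\<bar> < 1}" for i
    by (intro open_Collect_less continuous_intros)
  moreover have "open (\<Inter>i\<in>UNIV. {x::real^'n. \<bar>x $ i\<bar> < 1})"
    by (rule open_INT) (auto intro: calculation)
  ultimately show ?thesis by simp
qed

lemma point_in_plaque:
  fixes X :: "'a topology" and c :: "('a, 'n::finite, 't) lchart"
  assumes lc: "laminated_chart X c" and U: "openin X U" and p: "p \<in> U" "p \<in> ch_dom c"
  shows "\<exists>V t. open V \<and> V \<subseteq> cube \<and> p \<in> {q \<in> ch_dom c. fst (ch_map c q) \<in> V \<and> snd (ch_map c q) = t}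
     \<and> {q \<in> ch_dom c. fst (ch_map c q) \<in> V \<and> snd (ch_map c q) = t} \<subseteq> U"
proof -
  let ?P = "prod_topology (subtopology euclidean cube) (ch_T c)"
  have hm: "homeomorphic_map (subtopology X (ch_dom c)) ?P (ch_map c)"
    using lc unfolding laminated_chart_def by blast
  have dom: "openin X (ch_dom c)" using lc unfolding laminated_chart_def by blast
  have ts: "topspace (subtopology X (ch_dom c)) = ch_dom c"
    using dom openin_subset by (auto simp: topspace_subtopology)
  have inj: "inj_on (ch_map c) (ch_dom c)"
    using homeomorphic_imp_injective_map[OF hm] ts by simp
  define W where "W = ch_map c ` (ch_dom c \<inter> U)"
  have "openin (subtopology X (ch_dom c)) (ch_dom c \<inter> U)"
    using U by (simp add: openin_subtopology_Int2)
  hence Wo: "openin ?P W"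
    unfolding W_def using homeomorphic_map_openness[OF hm] ts by blast
  obtain x0 t where pt: "ch_map c p = (x0, t)" by (cases "ch_map c p") auto
  have "ch_map c p \<in> topspace ?P"
    using homeomorphic_imp_continuous_map[OF hm] p ts
    by (metis continuous_map_def Pi_iff)
  hence x0: "x0 \<in> cube" and t: "t \<in> topspace (ch_T c)" using pt by auto
  define V where "V = {x \<in> topspace (subtopology euclidean cube). (\<lambda>x. (x, t)) x \<in> W}"
  have cm: "continuous_map (subtopology euclidean cube) ?P (\<lambda>x. (x, t))"
    using t by (intro continuous_map_pairedI) auto
  have "openin (subtopology euclidean cube) V"
    unfolding V_def using cm Wo by (rule openin_continuous_map_preimage)
  hence oV: "open V" using open_cube openin_open_trans by blast
  have Vc: "V \<subseteq> cube" unfolding V_def by auto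
  have pin: "p \<in> {q \<in> ch_dom c. fst (ch_map c q) \<in> V \<and> snd (ch_map c q) = t}"
    using p pt x0 by (auto simp: V_def W_def image_iff intro!: bexI[of _ p])
  have sub: "{q \<in> ch_dom c. fst (ch_map c q) \<in> V \<and> snd (ch_map c q) = t} \<subseteq> U"
  proof
    fix q assume q: "q \<in> {q \<in> ch_dom c. fst (ch_map c q) \<in> V \<and> snd (ch_map c q) = t}"
    then obtain q' where q': "q' \<in> ch_dom c \<inter> U" "ch_map c q' = (fst (ch_map c q), t)"
      by (auto simp: V_def W_def)
    hence "ch_map c q' = ch_map c q" using q by (metis (mono_tags, lifting) mem_Collect_eq prod.collapse)
    hence "q' = q" using inj q q' by (auto dest: inj_onD)
    thus "q \<in> U" using q' by auto
  qed
  show ?thesis using oV Vc pin sub by blast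
qed

lemma open_imp_leafwise_open:
  fixes X :: "'a topology" and A :: "('a, 'n::finite, 't) lchart set"
  assumes lam: "lamination X A" and U: "openin X U"
  shows "openin (leafwise_topology A) U"
proof -
  define S where "S = {{q \<in> ch_dom c. fst (ch_map c q) \<in> V \<and> snd (ch_map c q) = t} | c V t.
        c \<in> A \<and> open V \<and> V \<subseteq> cube}"
  have L: "leafwise_topology A = topology_generated_by S" unfolding leafwise_topology_def S_def ..
  have cover: "\<forall>p\<in>U. \<exists>B\<in>S. p \<in> B \<and> B \<subseteq> U"
  proof
    fix p assume p: "p \<in> U"
    hence "p \<in> topspace X" using U openin_subset by blast
    then obtain c where c: "c \<in> A" "p \<in> ch_dom c" using lam unfolding lamination_def by blast
    have "laminated_chart X c" using lam c unfolding lamination_def by blast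
    from point_in_plaque[OF this U p c(2)] obtain V t where
      "open V" "V \<subseteq> cube" "p \<in> {q \<in> ch_dom c. fst (ch_map c q) \<in> V \<and> snd (ch_map c q) = t}"
      "{q \<in> ch_dom c. fst (ch_map c q) \<in> V \<and> snd (ch_map c q) = t} \<subseteq> U" by blast
    thus "\<exists>B\<in>S. p \<in> B \<and> B \<subseteq> U" using c unfolding S_def by blast
  qed
  have "U = \<Union>{B \<in> S. B \<subseteq> U}" using cover by blast
  moreover have "openin (topology_generated_by S) (\<Union>{B \<in> S. B \<subseteq> U})"
    unfolding openin_topology_generated_by_iff
    by (rule generate_topology_on.UN) (auto intro: generate_topology_on.Basis)
  ultimately show ?thesis using L by simp
qed

lemma leafwise_topspace_sub:
  fixes X :: "'a topology" and A :: "('a, 'n::finite, 't) lchart set"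
  assumes lam: "lamination X A"
  shows "topspace (leafwise_topology A) \<subseteq> topspace X"
proof -
  have "topspace (leafwise_topology A) \<subseteq> (\<Union>c\<in>A. ch_dom c)"
    unfolding leafwise_topology_def topology_generated_by_topspace
  proof (rule Union_least)
    fix B assume "B \<in> {{q \<in> ch_dom c. fst (ch_map c q) \<in> V \<and> snd (ch_map c q) = t} | c V t.
        c \<in> A \<and> open V \<and> V \<subseteq> cube}"
    then obtain c V t where "c \<in> A" "B = {q \<in> ch_dom c. fst (ch_map c q) \<in> V \<and> snd (ch_map c q) = t}"
      by blast
    thus "B \<subseteq> (\<Union>c\<in>A. ch_dom c)" by blast
  qed
  thus ?thesis using lam unfolding lamination_def by blast
qed

theorem lemma4p8:
  fixes X :: "'a topology"
    and A :: "('a, 'n::finite, 't) lchart set"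
    and g :: "('a, 'n, 't) lchart \<Rightarrow> real^'n \<Rightarrow> 't \<Rightarrow> real^'n^'n"
    and \<Omega> Y :: "'a set"
  assumes "riemannian_lamination X A g"
    and "compact_space X"
    and "\<Omega> \<subseteq> Y" and "Y \<subseteq> topspace X"
    and "openin (leafwise_topology A) \<Omega>"
    and "compactin (leafwise_topology A) Y"
  shows "\<exists>\<Omega>'. openin X \<Omega>' \<and> \<Omega>' \<inter> Y = \<Omega>"
proof -
  let ?L = "leafwise_topology A"
  have lam: "lamination X A" using assms(1) unfolding riemannian_lamination_def by blast
  have cm: "continuous_map ?L X id"
    unfolding continuous_map_def
  proof (intro conjI allI impI)
    show "id \<in> topspace ?L \<rightarrow> topspace X" using leafwise_topspace_sub[OF lam] by auto
  next
    fix U assume "openin X U"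
    hence "openin ?L U" by (rule open_imp_leafwise_open[OF lam])
    moreover have "{x \<in> topspace ?L. id x \<in> U} = U" using \<open>openin ?L U\<close> openin_subset by auto
    ultimately show "openin ?L {x \<in> topspace ?L. id x \<in> U}" by simp
  qed
  have "closedin ?L (topspace ?L - \<Omega>)"
    by (rule closedin_diff[OF closedin_topspace assms(5)])
  hence c1: "compactin ?L ((topspace ?L - \<Omega>) \<inter> Y)"
    by (rule closed_Int_compactin[OF _ assms(6)])
  have "(topspace ?L - \<Omega>) \<inter> Y = Y - \<Omega>"
    using compactin_subset_topspace[OF assms(6)] by blast
  hence "compactin ?L (Y - \<Omega>)" using c1 by simp
  hence "compactin X (id ` (Y - \<Omega>))" by (rule image_compactin[OF _ cm])
  hence "compactin X (Y - \<Omega>)" by simp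
  moreover have "Hausdorff_space X" using lam metrizable_imp_Hausdorff_space unfolding lamination_def by blast
  ultimately have "closedin X (Y - \<Omega>)" by (rule compactin_imp_closedin[rotated])
  hence "openin X (topspace X - (Y - \<Omega>))" by (rule openin_diff[OF openin_topspace])
  moreover have "(topspace X - (Y - \<Omega>)) \<inter> Y = \<Omega>" using assms(3,4) by blast
  ultimately show ?thesis by blast
qed

end
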